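(* Let $A$ be a T-brace and let $a\in\zeta_2(\star,A)$. If $a$ has infinite order in $(A,+)$, then $x\star a\in\langle a\star a\rangle$ and $a\star x\in\langle a\star a\rangle$ for all $x\in A$, where $\langle a\star a\rangle$ denotes the cyclic subgroup of $(A,+)$ generated by $a\star a$.
   Context: A (left) brace is a set $A$ with two operations $+$ and $\cdot$ such that $(A,+)$ is an abelian group, $(A,\cdot)$ is a group, and $a(b+c)=ab+ac-a$ for all $a,b,c\in A$. Put $a\star b=ab-a-b$. A subbrace is a subset which is a subgroup of both $(A,+)$ and $(A,\cdot)$; a subbrace $L$ is an ideal if $a\star z, z\star a\in L$ for all $a\in A$, $z\in L$, and then the quotient brace $A/L$ is defined. $A$ is a T-brace if whenever $I$ is an ideal of $J$ and $J$ is an ideal of $A$, then $I$ is an ideal of $A$. The $\star$-center is $\zeta(\star,A)=\{a: a\star x=x\star a=0\ \forall x\}$; $\zeta_2(\star,A)$ is given by $\zeta_2(\star,A)/\zeta(\star,A)=\zeta(\star,A/\zeta(\star,A))$. *)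

theory Defs
  imports Main
begin

text \<open>A (left) brace on the whole type 'a: the additive group is the ambient
  abelian group structure of 'a (class ab_group_add), the multiplicative
  group is given by the operation m.\<close>

definition mul_one :: "('a \<Rightarrow> 'a \<Rightarrow> 'a) \<Rightarrow> 'a" where
  "mul_one m = (THE e. \<forall>a. m e a = a \<and> m a e = a)"

definition brace :: "('a::ab_group_add \<Rightarrow> 'a \<Rightarrow> 'a) \<Rightarrow> bool" where
  "brace m \<longleftrightarrow>
     (\<forall>a b c. m (m a b) c = m a (m b c)) \<and>
     (\<exists>e. (\<forall>a. m e a = a \<and> m a e = a) \<and> (\<forall>a. \<exists>b. m a b = e \<and> m b a = e)) \<and>
     (\<forall>a b c. m a (b + c) = m a b + m a c - a)"

definition star :: "('a::ab_group_add \<Rightarrow> 'a \<Rightarrow> 'a) \<Rightarrow> 'a \<Rightarrow> 'a \<Rightarrow> 'a" where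
  "star m a b = m a b - a - b"

definition subbrace :: "('a::ab_group_add \<Rightarrow> 'a \<Rightarrow> 'a) \<Rightarrow> 'a set \<Rightarrow> bool" where
  "subbrace m S \<longleftrightarrow>
     0 \<in> S \<and> (\<forall>x\<in>S. \<forall>y\<in>S. x + y \<in> S) \<and> (\<forall>x\<in>S. - x \<in> S) \<and>
     mul_one m \<in> S \<and> (\<forall>x\<in>S. \<forall>y\<in>S. m x y \<in> S) \<and>
     (\<forall>x\<in>S. \<exists>y\<in>S. m x y = mul_one m \<and> m y x = mul_one m)"

definition ideal_of :: "('a::ab_group_add \<Rightarrow> 'a \<Rightarrow> 'a) \<Rightarrow> 'a set \<Rightarrow> 'a set \<Rightarrow> bool" where
  "ideal_of m J I \<longleftrightarrow> I \<subseteq> J \<and> subbrace m I \<and>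
     (\<forall>a\<in>J. \<forall>z\<in>I. star m a z \<in> I \<and> star m z a \<in> I)"

definition T_brace :: "('a::ab_group_add \<Rightarrow> 'a \<Rightarrow> 'a) \<Rightarrow> bool" where
  "T_brace m \<longleftrightarrow> brace m \<and>
     (\<forall>I J. ideal_of m J I \<and> ideal_of m UNIV J \<longrightarrow> ideal_of m UNIV I)"

definition star_center :: "('a::ab_group_add \<Rightarrow> 'a \<Rightarrow> 'a) \<Rightarrow> 'a set" where
  "star_center m = {a. \<forall>x. star m a x = 0 \<and> star m x a = 0}"

text \<open>Second star-center: preimage of the star-center of A / star_center,
  unfolded: in the quotient by the ideal Z, (a+Z) star (x+Z) = (a star x) + Z
  and the zero is Z.\<close>
definition star_center2 :: "('a::ab_group_add \<Rightarrow> 'a \<Rightarrow> 'a) \<Rightarrow> 'a set" where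
  "star_center2 m = {a. \<forall>x. star m a x \<in> star_center m \<and> star m x a \<in> star_center m}"

definition nsmul :: "nat \<Rightarrow> 'a::ab_group_add \<Rightarrow> 'a" where
  "nsmul n x = (((+) x) ^^ n) 0"

definition zsmul :: "int \<Rightarrow> 'a::ab_group_add \<Rightarrow> 'a" where
  "zsmul k x = (if 0 \<le> k then nsmul (nat k) x else - nsmul (nat (- k)) x)"

definition add_cyclic :: "'a::ab_group_add \<Rightarrow> 'a set" where
  "add_cyclic x = {zsmul k x | k. True}"

definition infinite_add_order :: "'a::ab_group_add \<Rightarrow> bool" where
  "infinite_add_order x \<longleftrightarrow> (\<forall>n::nat. 0 < n \<longrightarrow> nsmul n x \<noteq> 0)"

end

theory Submission
  imports Defs
begin


lemma nsmul_0[simp]: "nsmul 0 x = 0" by (simp add: nsmul_def)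
lemma nsmul_Suc[simp]: "nsmul (Suc n) x = x + nsmul n x" by (simp add: nsmul_def)

lemma zsmul_0[simp]: "zsmul 0 x = 0" by (simp add: zsmul_def)
lemma zsmul_1[simp]: "zsmul 1 x = x" by (simp add: zsmul_def)

lemma zsmul_succ: "zsmul (k+1) x = x + zsmul k x"
proof (cases "0 \<le> k")
  case True
  then have "nat (k+1) = Suc (nat k)" by simp
  then show ?thesis using True by (simp add: zsmul_def)
next
  case False
  show ?thesis
  proof (cases "k = -1")
    case True then show ?thesis by (simp add: zsmul_def)
  next
    case F: False
    then have "nat (-k) = Suc (nat (-(k+1)))" using False by simp
    then show ?thesis using False F by (simp add: zsmul_def)
  qed
qed

lemma zsmul_pred: "zsmul (k - 1) x = zsmul k x - x"
  using zsmul_succ[of "k-1" x] by (simp add: algebra_simps)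

lemma zsmul_add: "zsmul (k + l) x = zsmul k x + zsmul l x"
proof (induction l rule: int_induct[where k=0])
  case base then show ?case by simp
next
  case (step1 i)
  have "zsmul (k + (i+1)) x = zsmul ((k+i)+1) x" by (simp add: algebra_simps)
  also have "\<dots> = x + zsmul (k+i) x" by (rule zsmul_succ)
  finally show ?case using step1 zsmul_succ[of i x] by (simp add: algebra_simps)
next
  case (step2 i)
  have "zsmul (k + (i-1)) x = zsmul ((k+i)-1) x" by (simp add: algebra_simps)
  also have "\<dots> = zsmul (k+i) x - x" by (rule zsmul_pred)
  also have "\<dots> = zsmul k x + zsmul i x - x" using step2 by simp
  also have "\<dots> = zsmul k x + zsmul (i-1) x" unfolding zsmul_pred by (simp add: algebra_simps)
  finally show ?case .
qed

lemma zsmul_neg1: "zsmul (-k) x = - zsmul k x"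
proof -
  have "zsmul k x + zsmul (-k) x = 0" using zsmul_add[of k "-k" x] by simp
  then show ?thesis using minus_unique by metis
qed

lemma zsmul_mult: "zsmul (k * l) x = zsmul k (zsmul l x)"
proof (induction k rule: int_induct[where k=0])
  case base then show ?case by simp
next
  case (step1 i)
  have "zsmul ((i+1)*l) x = zsmul (i*l + l) x" by (simp add: algebra_simps)
  then show ?case using step1 zsmul_add[of "i*l" l x] zsmul_succ[of i "zsmul l x"]
    by (simp add: algebra_simps)
next
  case (step2 i)
  have "zsmul ((i-1)*l) x = zsmul (i*l + - l) x" by (simp add: algebra_simps)
  also have "\<dots> = zsmul (i*l) x + - zsmul l x" unfolding zsmul_add zsmul_neg1 ..
  also have "\<dots> = zsmul i (zsmul l x) - zsmul l x" using step2 by simp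
  also have "\<dots> = zsmul (i-1) (zsmul l x)" unfolding zsmul_pred ..
  finally show ?case .
qed

lemma zsmul_subgroup:
  assumes "0 \<in> S" "\<And>x y. x \<in> S \<Longrightarrow> y \<in> S \<Longrightarrow> x + y \<in> S" "\<And>x. x \<in> S \<Longrightarrow> - x \<in> S"
    and "u \<in> S"
  shows "zsmul k u \<in> S"
proof (induction k rule: int_induct[where k=0])
  case base then show ?case using assms by simp
next
  case (step1 i) show ?case unfolding zsmul_succ by (rule assms(2)[OF assms(4) step1(2)])
next
  case (step2 i)
  have "zsmul (i - 1) u = zsmul i u + - u" unfolding zsmul_pred by simp
  then show ?case using assms(2)[OF step2(2) assms(3)[OF assms(4)]] by simp
qed

lemma zsmul_hom:
  assumes "0 \<in> S" "\<And>x y. x \<in> S \<Longrightarrow> y \<in> S \<Longrightarrow> x + y \<in> S" "\<And>x. x \<in> S \<Longrightarrow> - x \<in> S"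
    and "u \<in> S"
    and f: "\<And>x y. x \<in> S \<Longrightarrow> y \<in> S \<Longrightarrow> f (x + y) = f x + f y"
  shows "f (zsmul k u) = zsmul k (f u)"
proof -
  have f0: "f 0 = 0" using f[of 0 0] assms(1) by simp
  have fn: "f (- x) = - f x" if "x \<in> S" for x
  proof -
    have "f x + f (-x) = 0" using f[of x "-x"] that assms(3) f0 by simp
    then show ?thesis using minus_unique by metis
  qed
  have S: "zsmul i u \<in> S" for i using zsmul_subgroup assms(1-4) by blast
  show ?thesis
  proof (induction k rule: int_induct[where k=0])
    case base then show ?case using f0 by simp
  next
    case (step1 i)
    have "f (zsmul (i+1) u) = f (u + zsmul i u)" by (simp only: zsmul_succ)
    also have "\<dots> = f u + f (zsmul i u)" by (rule f[OF assms(4) S])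
    also have "\<dots> = zsmul (i+1) (f u)" using step1 by (simp add: zsmul_succ)
    finally show ?case .
  next
    case (step2 i)
    have "f (zsmul (i-1) u) = f (zsmul i u + - u)" using zsmul_pred[of i u] by simp
    also have "\<dots> = f (zsmul i u) + - f u" using f[of "zsmul i u" "-u"] S assms fn by simp
    finally show ?case using step2 zsmul_pred[of i "f u"] by simp
  qed
qed

lemma zsmul_distrib: "zsmul k (x + y) = zsmul k x + zsmul k y"
proof (induction k rule: int_induct[where k=0])
  case base then show ?case by simp
next
  case (step1 i) then show ?case unfolding zsmul_succ by (simp add: algebra_simps)
next
  case (step2 i) then show ?case unfolding zsmul_pred by (simp add: algebra_simps)
qed

lemma zsmul_zero2[simp]: "zsmul k 0 = 0"
  using zsmul_distrib[of k 0 0] by simp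

lemma zsmul_uminus2: "zsmul k (- x) = - zsmul k x"
proof -
  have "zsmul k x + zsmul k (-x) = 0" using zsmul_distrib[of k x "-x"] by simp
  then show ?thesis using minus_unique by metis
qed


lemma inf_order_zsmul:
  assumes "infinite_add_order a" "zsmul k a = 0" shows "k = 0"
proof (rule ccontr)
  assume k: "k \<noteq> 0"
  show False
  proof (cases "0 \<le> k")
    case True
    then have "nsmul (nat k) a = 0" using assms(2) by (simp add: zsmul_def)
    moreover have "0 < nat k" using True k by simp
    ultimately show False using assms(1) unfolding infinite_add_order_def by blast
  next
    case False
    then have "nsmul (nat (-k)) a = 0" using assms(2) by (simp add: zsmul_def)
    moreover have "0 < nat (-k)" using False by simp
    ultimately show False using assms(1) unfolding infinite_add_order_def by blast
  qed
qed



locale brl =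
  fixes m :: "'a::ab_group_add \<Rightarrow> 'a \<Rightarrow> 'a"
  assumes br: "brace m"
begin

abbreviation s where "s \<equiv> star m"
abbreviation Z where "Z \<equiv> star_center m"
abbreviation Z2 where "Z2 \<equiv> star_center2 m"

lemma assoc: "m (m a b) c = m a (m b c)" using br unfolding brace_def by blast
lemma distr: "m a (b + c) = m a b + m a c - a" using br unfolding brace_def by blast

lemma mr0: "m a 0 = a"
  using distr[of a 0 0] by simp

lemma ml0: "m 0 a = a"
proof -
  obtain e where e: "\<forall>a. m e a = a \<and> m a e = a" using br unfolding brace_def by blast
  have "e = 0" using e mr0[of e] by metis
  then show ?thesis using e by simp
qed

lemma mul_one0: "mul_one m = 0"
  unfolding mul_one_def
proof (rule the_equality)
  show "\<forall>a. m 0 a = a \<and> m a 0 = a" using ml0 mr0 by simp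
next
  fix e assume "\<forall>a. m e a = a \<and> m a e = a"
  then show "e = 0" using mr0[of e] by metis
qed

lemma mstar: "m a b = a + b + s a b" by (simp add: star_def)

lemma star_add2: "s a (b + c) = s a b + s a c"
  unfolding star_def distr by (simp add: algebra_simps)

lemma star_0r[simp]: "s a 0 = 0" using star_add2[of a 0 0] by simp
lemma star_0l[simp]: "s 0 a = 0" by (simp add: star_def ml0)

lemma star_neg2: "s a (- b) = - s a b"
proof -
  have "s a b + s a (-b) = 0" using star_add2[of a b "-b"] by simp
  then show ?thesis using minus_unique by metis
qed

lemma star_mul1: "s (m u v) w = s u (s v w) + s v w + s u w"
proof -
  define t where "t = s v w"
  have "m v w = v + (w + t)" unfolding t_def star_def by simp
  then have "m (m u v) w = m u v + m u w + m u t - u - u"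
    using assoc[of u v w] distr[of u v "w+t"] distr[of u w t] by (simp add: algebra_simps)
  then show ?thesis unfolding t_def[symmetric] by (simp add: star_def algebra_simps)
qed

lemma Zl: "z \<in> Z \<Longrightarrow> s z x = 0" unfolding star_center_def by blast
lemma Zr: "z \<in> Z \<Longrightarrow> s x z = 0" unfolding star_center_def by blast

lemma Z0: "0 \<in> Z" unfolding star_center_def by simp

lemma Z_neg: assumes "t \<in> Z" shows "- t \<in> Z"
proof -
  have "m t (-t) = 0" using mstar[of t "-t"] Zl[OF assms] by simp
  then have "s 0 w = s t (s (-t) w) + s (-t) w + s t w" for w using star_mul1[of t "-t" w] by simp
  then have "s (-t) w = 0" for w using Zl[OF assms] by simp
  moreover have "s x (-t) = 0" for x using star_neg2 Zr[OF assms] by simp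
  ultimately show ?thesis unfolding star_center_def by blast
qed

lemma key:
  assumes u: "\<And>y. s u y \<in> Z"
  shows "s (u + v) w = s u (s v w) + s v w + s u w"
proof -
  define t where "t = s u v"
  have tZ: "t \<in> Z" using u t_def by simp
  have e2: "m v (-t) = v - t" using mstar[of v "-t"] star_neg2[of v t] Zr[OF tZ] by simp
  have e1: "m u (v - t) = u + v"
    using mstar[of u "v - t"] star_add2[of u v "-t"] star_neg2[of u t] Zr[OF tZ] t_def
    by (simp add: algebra_simps)
  have "s (u + v) w = s (m u (m v (-t))) w" using e1 e2 by simp
  also have "\<dots> = s u (s (m v (-t)) w) + s (m v (-t)) w + s u w" by (rule star_mul1)
  also have "s (m v (-t)) w = s v w"
    using star_mul1[of v "-t" w] Zl[OF Z_neg[OF tZ]] by simp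
  finally show ?thesis .
qed

lemma Z_add: assumes "z1 \<in> Z" "z2 \<in> Z" shows "z1 + z2 \<in> Z"
proof -
  have "s (z1 + z2) w = 0" for w using key[of z1 z2 w] Zl[OF assms(1)] Zl[OF assms(2)] Z0 by simp
  moreover have "s x (z1 + z2) = 0" for x using star_add2 Zr assms by simp
  ultimately show ?thesis unfolding star_center_def by blast
qed

lemma Z2l: "u \<in> Z2 \<Longrightarrow> s u x \<in> Z" unfolding star_center2_def by blast
lemma Z2r: "u \<in> Z2 \<Longrightarrow> s x u \<in> Z" unfolding star_center2_def by blast
lemma Z2I: "(\<And>x. s u x \<in> Z) \<Longrightarrow> (\<And>x. s x u \<in> Z) \<Longrightarrow> u \<in> Z2"
  unfolding star_center2_def by blast

lemma Z_Z2: "z \<in> Z \<Longrightarrow> z \<in> Z2" using Zl Zr Z0 by (intro Z2I) auto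

lemma right_add: assumes "u \<in> Z2" "v \<in> Z2" shows "s (u + v) w = s u w + s v w"
  using key[of u v w] Z2l[OF assms(1)] Zr[OF Z2l[OF assms(2)]] by simp

lemma Z2_add: assumes "u \<in> Z2" "v \<in> Z2" shows "u + v \<in> Z2"
proof (rule Z2I)
  fix x show "s (u + v) x \<in> Z" using right_add[OF assms] Z_add Z2l assms by simp
next
  fix x show "s x (u + v) \<in> Z" using star_add2 Z_add Z2r assms by simp
qed

lemma Z2_neg: assumes "u \<in> Z2" shows "- u \<in> Z2"
proof (rule Z2I)
  fix x
  have "s 0 x = s u (s (-u) x) + s (-u) x + s u x" using key[of u "-u" x] Z2l[OF assms] by simp
  then have "s u x + (s (-u) x + s u (s (-u) x)) = 0" by (simp add: algebra_simps)
  then have "s (-u) x + s u (s (-u) x) = - s u x" using minus_unique by metis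
  then have "s (-u) x = - s u (s (-u) x) + - s u x" by (metis add_diff_cancel_right' add.commute diff_conv_add_uminus)
  moreover have "- s u (s (-u) x) + - s u x \<in> Z" using Z_add Z_neg Z2l[OF assms] by blast
  ultimately show "s (-u) x \<in> Z" by metis
next
  fix x show "s x (- u) \<in> Z" using star_neg2 Z_neg Z2r assms by simp
qed

lemma Z2_0: "0 \<in> Z2" using Z_Z2 Z0 by blast

lemma Z2_inv: assumes "u \<in> Z2"
  shows "m u (- u + s u u) = 0 \<and> m (- u + s u u) u = 0"
proof
  have tZ: "s u u \<in> Z" using Z2l assms by blast
  show "m u (- u + s u u) = 0"
    using mstar[of u "- u + s u u"] star_add2[of u "-u" "s u u"] star_neg2[of u u] Zr[OF tZ]
    by simp
  have "s (u + - u) u = s u u + s (-u) u" using right_add assms Z2_neg by blast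
  then have n: "s (-u) u = - s u u" by (simp add: eq_neg_iff_add_eq_0 add.commute)
  have "s (- u + s u u) u = s (-u) u + s (s u u) u"
    using right_add Z2_neg assms Z_Z2 tZ by blast
  then have "s (- u + s u u) u = - s u u" using n Zl[OF tZ] by simp
  then show "m (- u + s u u) u = 0" using mstar[of "- u + s u u" u] by simp
qed

lemma subbraceI:
  assumes "S \<subseteq> Z2" "0 \<in> S" "\<And>x y. x \<in> S \<Longrightarrow> y \<in> S \<Longrightarrow> x + y \<in> S"
    "\<And>x. x \<in> S \<Longrightarrow> - x \<in> S" "\<And>x y. x \<in> S \<Longrightarrow> y \<in> S \<Longrightarrow> s x y \<in> S"
  shows "subbrace m S"
  unfolding subbrace_def mul_one0
proof (intro conjI ballI)
  fix x y assume "x \<in> S" "y \<in> S" then show "m x y \<in> S" using assms mstar by simp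
next
  fix x assume x: "x \<in> S"
  show "\<exists>y\<in>S. m x y = 0 \<and> m y x = 0"
    using Z2_inv[of x] x assms by blast
qed (use assms in auto)

end



context brl
begin

lemma lhom: "s u (zsmul k x) = zsmul k (s u x)"
  by (rule zsmul_hom[where S=UNIV]) (auto simp: star_add2)

lemma rhom: assumes "u \<in> Z2" shows "s (zsmul k u) w = zsmul k (s u w)"
  by (rule zsmul_hom[where S=Z2 and f="\<lambda>v. s v w", OF Z2_0 Z2_add Z2_neg assms right_add])

lemma main:
  assumes T: "\<forall>I J. ideal_of m J I \<and> ideal_of m UNIV J \<longrightarrow> ideal_of m UNIV I"
    and a: "a \<in> Z2" and inf: "infinite_add_order a"
  shows "\<forall>x. s x a \<in> add_cyclic (s a a) \<and> s a x \<in> add_cyclic (s a a)"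
proof -
  define c where "c = s a a"
  have cZ: "c \<in> Z" using a Z2l c_def by blast
  have za: "zsmul k a \<in> Z2" for k by (rule zsmul_subgroup[OF Z2_0 Z2_add Z2_neg a])
  have zc: "zsmul l c \<in> Z" for l by (rule zsmul_subgroup[OF Z0 Z_add Z_neg cZ])
  define J where "J = {zsmul k a + z | k z. z \<in> Z}"
  define I where "I = {zsmul k a + zsmul l c | k l. True}"
  have JZ2: "J \<subseteq> Z2"
  proof
    fix x assume "x \<in> J"
    then obtain k z where x: "x = zsmul k a + z" "z \<in> Z" unfolding J_def by blast
    show "x \<in> Z2" unfolding x(1) by (rule Z2_add[OF za Z_Z2[OF x(2)]])
  qed
  have IJ: "I \<subseteq> J"
  proof
    fix x assume "x \<in> I"
    then obtain k l where x: "x = zsmul k a + zsmul l c" unfolding I_def by blast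
    show "x \<in> J" unfolding J_def x using zc[of l] by blast
  qed
  have ZJ: "z \<in> J" if zZ: "z \<in> Z" for z
  proof -
    have "z = zsmul 0 a + z" by simp
    then show ?thesis unfolding J_def using zZ by blast
  qed
  have cI: "zsmul l c \<in> I" for l
  proof -
    have "zsmul l c = zsmul 0 a + zsmul l c" by simp
    then show ?thesis unfolding I_def by blast
  qed
  have sJa: "\<exists>k. s u a = zsmul k c" if "u \<in> J" for u
  proof -
    obtain k z where u: "u = zsmul k a + z" "z \<in> Z" using \<open>u \<in> J\<close> unfolding J_def by blast
    have "s u a = s (zsmul k a) a + s z a" unfolding u(1) by (rule right_add[OF za Z_Z2[OF u(2)]])
    also have "\<dots> = zsmul k c" using rhom[OF a] Zl[OF u(2)] c_def by simp
    finally show ?thesis by blast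
  qed
  have sJJ: "\<exists>l. s u v = zsmul l c" if "u \<in> J" "v \<in> J" for u v
  proof -
    obtain k z where v: "v = zsmul k a + z" "z \<in> Z" using \<open>v \<in> J\<close> unfolding J_def by blast
    obtain k' where k': "s u a = zsmul k' c" using sJa[OF \<open>u \<in> J\<close>] by blast
    have "s u v = s u (zsmul k a) + s u z" using v star_add2 by simp
    also have "\<dots> = zsmul k (zsmul k' c)" using lhom k' Zr[OF v(2)] by simp
    also have "\<dots> = zsmul (k * k') c" by (rule zsmul_mult[symmetric])
    finally show ?thesis by blast
  qed
  have J0: "0 \<in> J" using ZJ Z0 by blast
  have Jadd: "x + y \<in> J" if xJ: "x \<in> J" and yJ: "y \<in> J" for x y
  proof -
    obtain k z where x: "x = zsmul k a + z" "z \<in> Z" using xJ unfolding J_def by blast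
    obtain k' z' where y: "y = zsmul k' a + z'" "z' \<in> Z" using yJ unfolding J_def by blast
    have "x + y = zsmul (k + k') a + (z + z')" using x y by (simp add: zsmul_add algebra_simps)
    then show ?thesis unfolding J_def using Z_add x y by blast
  qed
  have Jneg: "- x \<in> J" if xJ: "x \<in> J" for x
  proof -
    obtain k z where x: "x = zsmul k a + z" "z \<in> Z" using xJ unfolding J_def by blast
    have "- x = zsmul (- k) a + (- z)" using x by (simp add: zsmul_neg1 algebra_simps)
    then show ?thesis unfolding J_def using Z_neg x by blast
  qed
  have Jstar: "s x y \<in> J" if "x \<in> J" "y \<in> J" for x y
    using ZJ[OF Z2l[OF subsetD[OF JZ2 that(1)]]] .
  have subJ: "subbrace m J" using subbraceI[OF JZ2 J0 Jadd Jneg Jstar] by blast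
  have I0: "0 \<in> I" using cI[of 0] by simp
  have Iadd: "x + y \<in> I" if xJ: "x \<in> I" and yJ: "y \<in> I" for x y
  proof -
    obtain k l where x: "x = zsmul k a + zsmul l c" using xJ unfolding I_def by blast
    obtain k' l' where y: "y = zsmul k' a + zsmul l' c" using yJ unfolding I_def by blast
    have "x + y = zsmul (k + k') a + zsmul (l + l') c" using x y by (simp add: zsmul_add algebra_simps)
    then show ?thesis unfolding I_def by blast
  qed
  have Ineg: "- x \<in> I" if xJ: "x \<in> I" for x
  proof -
    obtain k l where x: "x = zsmul k a + zsmul l c" using xJ unfolding I_def by blast
    have "- x = zsmul (- k) a + zsmul (- l) c" using x by (simp add: zsmul_neg1 algebra_simps)
    then show ?thesis unfolding I_def by blast
  qed
  have Istar: "s x y \<in> I" if xJ: "x \<in> J" and yJ: "y \<in> J" for x y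
  proof -
    obtain l where "s x y = zsmul l c" using sJJ[OF xJ yJ] by blast
    then show ?thesis using cI by simp
  qed
  have IZ2: "I \<subseteq> Z2" using IJ JZ2 by (rule subset_trans)
  have Istar': "s x y \<in> I" if "x \<in> I" "y \<in> I" for x y
    using Istar[OF subsetD[OF IJ that(1)] subsetD[OF IJ that(2)]] .
  have subI: "subbrace m I" by (rule subbraceI[OF IZ2 I0 Iadd Ineg Istar'])
  have idJ: "ideal_of m UNIV J" unfolding ideal_of_def
  proof (intro conjI ballI)
    fix x z assume "z \<in> J"
    then have zz: "z \<in> Z2" using JZ2 by blast
    show "s x z \<in> J" by (rule ZJ[OF Z2r[OF zz]])
    show "s z x \<in> J" by (rule ZJ[OF Z2l[OF zz]])
  qed (auto simp: subJ)
  have idI: "ideal_of m J I" unfolding ideal_of_def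
  proof (intro conjI ballI)
    fix x z assume "x \<in> J" "z \<in> I"
    then have zz: "z \<in> J" using IJ by blast
    show "s x z \<in> I" by (rule Istar[OF \<open>x \<in> J\<close> zz])
    show "s z x \<in> I" by (rule Istar[OF zz \<open>x \<in> J\<close>])
  qed (auto simp: subI IJ)
  have idIA: "ideal_of m UNIV I" using T idI idJ by blast
  have aI: "a \<in> I"
  proof -
    have "a = zsmul 1 a + zsmul 0 c" by simp
    then show ?thesis unfolding I_def by blast
  qed
  have fin: "d \<in> add_cyclic c"
    if d: "d \<in> I" "d \<in> Z" and h: "\<And>n. zsmul n a \<in> Z \<Longrightarrow> zsmul n d = 0" for d
  proof -
    obtain n r where dn: "d = zsmul n a + zsmul r c" using d unfolding I_def by blast
    have "zsmul n a = d + - zsmul r c" using dn by simp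
    moreover have "d + - zsmul r c \<in> Z" using Z_add[OF d(2) Z_neg[OF zc]] .
    ultimately have naZ: "zsmul n a \<in> Z" by simp
    have nd: "zsmul n d = 0" using h naZ by blast
    have nc: "zsmul n c = 0" using lhom[of a n a] Zr[OF naZ] c_def by simp
    have "zsmul n d = zsmul n (zsmul n a) + zsmul r (zsmul n c)"
      unfolding dn zsmul_distrib zsmul_mult[symmetric] by (simp add: mult.commute)
    then have "zsmul (n * n) a = 0" using nd nc by (simp add: zsmul_mult)
    then have "n * n = 0" using inf_order_zsmul inf by blast
    then have "n = 0" by simp
    then show ?thesis using dn unfolding add_cyclic_def by auto
  qed
  show ?thesis
  proof (intro allI conjI)
    fix x
    show "s x a \<in> add_cyclic (s a a)" unfolding c_def[symmetric]
    proof (rule fin)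
      show "s x a \<in> I" using idIA aI unfolding ideal_of_def by blast
      show "s x a \<in> Z" using Z2r a by blast
      fix n assume "zsmul n a \<in> Z"
      then show "zsmul n (s x a) = 0" using lhom[of x n a] Zr by simp
    qed
    show "s a x \<in> add_cyclic (s a a)" unfolding c_def[symmetric]
    proof (rule fin)
      show "s a x \<in> I" using idIA aI unfolding ideal_of_def by blast
      show "s a x \<in> Z" using Z2l a by blast
      fix n assume "zsmul n a \<in> Z"
      then show "zsmul n (s a x) = 0" using rhom[OF a, of n x] Zl by simp
    qed
  qed
qed

end

theorem lemma4p3:
  fixes m :: "'a::ab_group_add \<Rightarrow> 'a \<Rightarrow> 'a" and a :: 'a
  assumes "T_brace m"
    and "a \<in> star_center2 m"
    and "infinite_add_order a"
  shows "\<forall>x. star m x a \<in> add_cyclic (star m a a) \<and> star m a x \<in> add_cyclic (star m a a)"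
proof -
  interpret brl m using assms(1) unfolding T_brace_def by unfold_locales blast
  show ?thesis using main assms unfolding T_brace_def by blast
qed

end
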